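(* Let $V$ be a finite nonempty set and $f:\{0,1\}^V\to\{0,1\}^V$. (1) $f$ is positive-circular if and only if $f$ is 2-critical and non-expansive. (2) $f$ is negative-circular if and only if $f$ is 0-critical and non-expansive.
   Context: For $x,y\in\{0,1\}^V$, $d(x,y)$ is the Hamming distance; $f$ is non-expansive if $d(f(x),f(y))\le d(x,y)$ for all $x,y$. For nonempty $I\subseteq V$ and $z\in\{0,1\}^{V\setminus I}$, the subnetwork of $f$ induced by $z$ is $h:\{0,1\}^I\to\{0,1\}^I$ with $h(x|_I)=f(x)|_I$ for all $x$ whose restriction to $V\setminus I$ is $z$; a strict subnetwork is a subnetwork different from $f$. $f$ is 2-critical if $f$ has at least two fixed points and every strict subnetwork of $f$ has at most one fixed point; $f$ is 0-critical if $f$ has no fixed point and every strict subnetwork of $f$ has at least one fixed point. For $x^{j\alpha}$ the point equal to $x$ except its $j$-component is $\alpha$, the global interaction graph $G(f)$ is the signed digraph on $V$ with a positive (resp. negative) arc from $j$ to $i$ iff $f_i(x^{j1})-f_i(x^{j0})=1$ (resp. $=-1$) for at least one $x$. A cycle is a subgraph with at most one arc between any ordered pair of vertices whose underlying unsigned digraph is a directed cycle; positive (negative) if it has an even (odd) number of negative arcs. $f$ is positive-circular (negative-circular) if $G(f)$ itself is a positive (negative) cycle through all vertices of $V$. *)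

theory Defs
  imports Main
begin

text \<open>Boolean networks on a finite nonempty vertex type 'v.
  A configuration x in {0,1}^V is a function 'v => bool (True = 1).\<close>

type_synonym 'v config = "'v \<Rightarrow> bool"

definition hamming :: "('v::finite) config \<Rightarrow> 'v config \<Rightarrow> nat" where
  "hamming x y = card {v. x v \<noteq> y v}"

definition non_expansive :: "(('v::finite) config \<Rightarrow> 'v config) \<Rightarrow> bool" where
  "non_expansive f \<longleftrightarrow> (\<forall>x y. hamming (f x) (f y) \<le> hamming x y)"

text \<open>Configurations on a subset I of V, represented extensionally
  (value False outside I).\<close>
definition confs_on :: "'v set \<Rightarrow> 'v config set" where
  "confs_on I = {x. \<forall>v. v \<notin> I \<longrightarrow> x v = False}"

definition glue :: "'v set \<Rightarrow> 'v config \<Rightarrow> 'v config \<Rightarrow> 'v config" where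
  "glue I x z = (\<lambda>v. if v \<in> I then x v else z v)"

text \<open>The subnetwork of f on I induced by z (z a configuration on V - I):
  h(x|I) = f(x)|I for x extending z.\<close>
definition subnet :: "('v config \<Rightarrow> 'v config) \<Rightarrow> 'v set \<Rightarrow> 'v config \<Rightarrow> 'v config \<Rightarrow> 'v config" where
  "subnet f I z = (\<lambda>x. \<lambda>v. if v \<in> I then f (glue I x z) v else False)"

definition sub_fixpoints :: "('v config \<Rightarrow> 'v config) \<Rightarrow> 'v set \<Rightarrow> 'v config \<Rightarrow> 'v config set" where
  "sub_fixpoints f I z = {x \<in> confs_on I. subnet f I z x = x}"

definition fixpoints :: "('v config \<Rightarrow> 'v config) \<Rightarrow> 'v config set" where
  "fixpoints f = {x. f x = x}"

text \<open>Strict subnetworks are exactly those with nonempty I different from V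
  (for I = V the subnetwork is f itself; for I a proper subset the domain differs).\<close>
definition two_critical :: "(('v::finite) config \<Rightarrow> 'v config) \<Rightarrow> bool" where
  "two_critical f \<longleftrightarrow> card (fixpoints f) \<ge> 2 \<and>
     (\<forall>I z. I \<noteq> {} \<and> I \<noteq> UNIV \<and> z \<in> confs_on (- I) \<longrightarrow> card (sub_fixpoints f I z) \<le> 1)"

definition zero_critical :: "(('v::finite) config \<Rightarrow> 'v config) \<Rightarrow> bool" where
  "zero_critical f \<longleftrightarrow> fixpoints f = {} \<and>
     (\<forall>I z. I \<noteq> {} \<and> I \<noteq> UNIV \<and> z \<in> confs_on (- I) \<longrightarrow> sub_fixpoints f I z \<noteq> {})"

definition pos_arc :: "('v config \<Rightarrow> 'v config) \<Rightarrow> 'v \<Rightarrow> 'v \<Rightarrow> bool" where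
  "pos_arc f j i \<longleftrightarrow> (\<exists>x. f (x(j := True)) i \<and> \<not> f (x(j := False)) i)"

definition neg_arc :: "('v config \<Rightarrow> 'v config) \<Rightarrow> 'v \<Rightarrow> 'v \<Rightarrow> bool" where
  "neg_arc f j i \<longleftrightarrow> (\<exists>x. \<not> f (x(j := True)) i \<and> f (x(j := False)) i)"

definition arcs :: "('v config \<Rightarrow> 'v config) \<Rightarrow> ('v \<times> 'v) set" where
  "arcs f = {(j, i). pos_arc f j i \<or> neg_arc f j i}"

definition hamiltonian_cycle :: "(('v::finite) \<times> 'v) set \<Rightarrow> bool" where
  "hamiltonian_cycle E \<longleftrightarrow> (\<exists>\<sigma> :: nat \<Rightarrow> 'v. bij_betw \<sigma> {..<card (UNIV :: 'v set)} UNIV \<and>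
      E = {(\<sigma> k, \<sigma> (Suc k mod card (UNIV :: 'v set))) | k. k < card (UNIV :: 'v set)})"

definition Gf_full_cycle :: "(('v::finite) config \<Rightarrow> 'v config) \<Rightarrow> bool" where
  "Gf_full_cycle f \<longleftrightarrow> (\<forall>j i. \<not> (pos_arc f j i \<and> neg_arc f j i)) \<and> hamiltonian_cycle (arcs f)"

definition num_neg_arcs :: "(('v::finite) config \<Rightarrow> 'v config) \<Rightarrow> nat" where
  "num_neg_arcs f = card {(j, i). neg_arc f j i}"

definition positive_circular :: "(('v::finite) config \<Rightarrow> 'v config) \<Rightarrow> bool" where
  "positive_circular f \<longleftrightarrow> Gf_full_cycle f \<and> even (num_neg_arcs f)"

definition negative_circular :: "(('v::finite) config \<Rightarrow> 'v config) \<Rightarrow> bool" where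
  "negative_circular f \<longleftrightarrow> Gf_full_cycle f \<and> odd (num_neg_arcs f)"

end

theory Submission
  imports Defs
begin


lemma hamming_alt: "hamming x y = card {v. x v \<noteq> y v}"
  by (simp add: hamming_def)

lemma hamming_sym: "hamming x y = hamming y x"
  unfolding hamming_def by (metis)

lemma hamming_0: "hamming x y = 0 \<longleftrightarrow> x = y"
  unfolding hamming_def by (auto simp: fun_eq_iff)

lemma hamming_flip:
  "hamming x (y(v := \<not> y v)) = (if x v = y v then Suc (hamming x y) else hamming x y - 1)"
proof (cases "x v = y v")
  case True
  have "{u. x u \<noteq> (y(v := \<not> y v)) u} = insert v {u. x u \<noteq> y u}" using True by auto
  moreover have "v \<notin> {u. x u \<noteq> y u}" using True by auto
  ultimately have "hamming x (y(v := \<not> y v)) = Suc (hamming x y)"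
    unfolding hamming_def by (metis card_insert_disjoint finite)
  then show ?thesis using True by simp
next
  case False
  have "{u. x u \<noteq> (y(v := \<not> y v)) u} = {u. x u \<noteq> y u} - {v}" using False by auto
  moreover have "v \<in> {u. x u \<noteq> y u}" using False by auto
  ultimately have "hamming x (y(v := \<not> y v)) = hamming x y - 1"
    unfolding hamming_def by (metis card_Diff_singleton)
  then show ?thesis using False by simp
qed

lemma hamming_pos: "x v \<noteq> y v \<Longrightarrow> hamming x y \<ge> 1"
  using hamming_0 by (metis less_one not_less)

lemma hamming_compl:
  fixes x a :: "('v::finite) config"
  shows "hamming x a + hamming x (\<lambda>v. \<not> a v) = card (UNIV :: 'v set)"
proof -
  have "{v. x v \<noteq> a v} \<union> {v. x v \<noteq> (\<not> a v)} = UNIV" by auto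
  moreover have "{v. x v \<noteq> a v} \<inter> {v. x v \<noteq> (\<not> a v)} = {}" by auto
  ultimately show ?thesis unfolding hamming_def
    by (metis card_Un_disjoint finite)
qed

lemma card_xor_parity:
  fixes A B :: "'v::finite \<Rightarrow> bool"
  shows "even (card {v. A v \<noteq> B v}) \<longleftrightarrow> even (card {v. A v} + card {v. B v})"
proof -
  let ?A = "{v. A v}" and ?B = "{v. B v}"
  have e: "{v. A v \<noteq> B v} = (?A \<union> ?B) - (?A \<inter> ?B)" by auto
  have c1: "card ?A + card ?B = card (?A \<union> ?B) + card (?A \<inter> ?B)"
    by (rule card_Un_Int) auto
  have c2: "card ((?A \<union> ?B) - (?A \<inter> ?B)) = card (?A \<union> ?B) - card (?A \<inter> ?B)"
    by (rule card_Diff_subset) auto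
  have c3: "card (?A \<inter> ?B) \<le> card (?A \<union> ?B)" by (rule card_mono) auto
  define p where "p = card (?A \<union> ?B)"
  define q where "q = card (?A \<inter> ?B)"
  have "even (p - q) \<longleftrightarrow> even (p + q)" using c3 unfolding p_def[symmetric] q_def[symmetric]
    by (metis add_diff_cancel_right' dvd_add_triv_right_iff even_add le_add_diff_inverse2)
  then show ?thesis unfolding e c2 c1 p_def q_def .
qed



definition cform :: "(('v::finite) config \<Rightarrow> 'v config) \<Rightarrow> ('v \<Rightarrow> 'v) \<Rightarrow> bool" where
  "cform f \<rho> \<longleftrightarrow> bij \<rho> \<and> (\<forall>x u. f x (\<rho> u) = (x u \<noteq> f (\<lambda>_. False) (\<rho> u)))"

definition cover :: "('v \<Rightarrow> 'v) \<Rightarrow> bool" where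
  "cover \<rho> \<longleftrightarrow> (\<exists>v0. \<forall>v. \<exists>t. (\<rho> ^^ t) v0 = v)"

lemma single:
  fixes \<rho> :: "'v::finite \<Rightarrow> 'v"
  assumes b: "bij \<rho>" and c: "cover \<rho>" and cl: "\<forall>u. \<rho> u \<in> D \<longrightarrow> u \<in> D"
  shows "D = {} \<or> D = UNIV"
proof -
  have sub: "\<rho> -` D \<subseteq> D" using cl by auto
  have "card (\<rho> -` D) = card D"
    using b by (simp add: bij_def card_vimage_inj)
  then have eq: "\<rho> -` D = D" by (intro card_subset_eq[OF _ sub]) simp_all
  obtain v0 where v0: "\<forall>v. \<exists>t. (\<rho> ^^ t) v0 = v" using c unfolding cover_def by (elim exE) blast
  have it: "(\<rho> ^^ t) v0 \<in> D \<longleftrightarrow> v0 \<in> D" for t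
  proof (induction t)
    case 0 then show ?case by simp
  next
    case (Suc t)
    have "(\<rho> ^^ Suc t) v0 \<in> D \<longleftrightarrow> (\<rho> ^^ t) v0 \<in> \<rho> -` D" by simp
    also have "\<dots> \<longleftrightarrow> (\<rho> ^^ t) v0 \<in> D" by (subst eq) (rule refl)
    finally show ?case using Suc.IH by blast
  qed
  show ?thesis
  proof (cases "v0 \<in> D")
    case True
    have "v \<in> D" for v
    proof -
      obtain t where "(\<rho> ^^ t) v0 = v" using v0 by blast
      then show ?thesis using it[of t] True by simp
    qed
    then show ?thesis by auto
  next
    case False
    have "v \<notin> D" for v
    proof -
      obtain t where "(\<rho> ^^ t) v0 = v" using v0 by blast
      then show ?thesis using it[of t] False by simp
    qed
    then show ?thesis by auto
  qed
qed

lemma cform_app: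
  assumes "cform f \<rho>" shows "f x (\<rho> u) = (x u \<noteq> f (\<lambda>_. False) (\<rho> u))"
proof -
  have "\<forall>x u. f x (\<rho> u) = (x u \<noteq> f (\<lambda>_. False) (\<rho> u))" using assms unfolding cform_def by (rule conjunct2)
  then show ?thesis by (rule spec[of _ u, OF spec[of _ x]])
qed

lemma cform_nonexp:
  assumes "cform f \<rho>" shows "non_expansive f"
  unfolding non_expansive_def
proof (intro allI)
  fix x y
  have b: "bij \<rho>" using assms cform_def by blast
  have "{v. f x v \<noteq> f y v} = \<rho> ` {u. f x (\<rho> u) \<noteq> f y (\<rho> u)}"
    using b by (auto simp: bij_def image_iff)
  moreover have "{u. f x (\<rho> u) \<noteq> f y (\<rho> u)} = {u. x u \<noteq> y u}"
    by (rule Collect_cong, subst (1 2) cform_app[OF assms], auto)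
  ultimately have "hamming (f x) (f y) = card (\<rho> ` {u. x u \<noteq> y u})" by (simp add: hamming_def)
  also have "\<dots> = hamming x y" using b unfolding hamming_def by (metis bij_is_inj card_image inj_on_subset subset_UNIV)
  finally show "hamming (f x) (f y) \<le> hamming x y" by simp
qed

lemma cform_parity:
  assumes "cform f \<rho>"
  shows "even (hamming x (f x)) \<longleftrightarrow> even (card {u. f (\<lambda>_. False) (\<rho> u)})"
proof -
  let ?c = "\<lambda>u. f (\<lambda>_. False) (\<rho> u)"
  have b: "bij \<rho>" using assms cform_def by blast
  have "{v. x v \<noteq> f x v} = \<rho> ` {u. x (\<rho> u) \<noteq> f x (\<rho> u)}"
    using b by (auto simp: bij_def image_iff)
  then have "hamming x (f x) = card {u. x (\<rho> u) \<noteq> f x (\<rho> u)}"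
    using b unfolding hamming_def by (metis bij_is_inj card_image inj_on_subset subset_UNIV)
  also have "\<dots> = card {u. x (\<rho> u) \<noteq> (x u \<noteq> ?c u)}"
    by (rule arg_cong[where f=card], rule Collect_cong, subst cform_app[OF assms], rule refl)
  finally have h: "hamming x (f x) = card {u. x (\<rho> u) \<noteq> (x u \<noteq> ?c u)}" .
  have r: "card {u. x (\<rho> u)} = card {u. x u}"
  proof -
    have "{u. x u} = \<rho> ` {u. x (\<rho> u)}"
      using b by (auto simp: bij_def image_iff)
    then show ?thesis using b by (metis bij_is_inj card_image inj_on_subset subset_UNIV)
  qed
  have "even (hamming x (f x)) \<longleftrightarrow> even (card {u. x (\<rho> u)} + card {u. x u \<noteq> ?c u})"
    unfolding h by (rule card_xor_parity)
  also have "\<dots> \<longleftrightarrow> even (card {u. x u} + (card {u. x u} + card {u. ?c u}))"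
    using card_xor_parity[of x ?c] r by simp
  also have "\<dots> \<longleftrightarrow> even (card {u. ?c u})" by (simp only: even_add) blast
  finally show ?thesis .
qed



lemma cform_exists:
  fixes f :: "('v::finite) config \<Rightarrow> 'v config"
  assumes cf: "cform f \<rho>" and cv: "cover \<rho>"
  shows "I \<noteq> UNIV \<Longrightarrow> \<exists>w. (\<forall>v. v \<notin> I \<longrightarrow> w v = z v) \<and> (\<forall>v\<in>I. f w v = w v)"
proof (induction "card I" arbitrary: I z)
  case 0
  then have "I = {}" by simp
  then show ?case by auto
next
  case (Suc m)
  have b: "bij \<rho>" using cf cform_def by blast
  have "I \<noteq> {}" using Suc.hyps(2) by auto
  then have "\<not> (\<forall>u. \<rho> u \<in> I \<longrightarrow> u \<in> I)" using single[OF b cv, of I] Suc.prems by blast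
  then obtain u where u1: "\<rho> u \<in> I" and u2: "u \<notin> I" by blast
  define v where "v = \<rho> u"
  define I' where "I' = I - {v}"
  define z' where "z' = z(v := f z v)"
  have "card I' = m" using Suc.hyps(2) u1 unfolding I'_def v_def by simp
  moreover have "I' \<noteq> UNIV" using Suc.prems unfolding I'_def by auto
  ultimately obtain w where w1: "\<forall>v'. v' \<notin> I' \<longrightarrow> w v' = z' v'" and w2: "\<forall>v'\<in>I'. f w v' = w v'"
    using Suc.hyps(1) by blast
  have uv: "u \<noteq> v" using u1 u2 v_def by auto
  have wu: "w u = z u" using w1 u2 uv unfolding I'_def z'_def by auto
  have wv: "w v = f z v" using w1 unfolding I'_def z'_def by auto
  have fv: "f w v = f z v"
    unfolding v_def by (subst (1 2) cform_app[OF cf]) (simp add: wu)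
  show ?case
  proof (intro exI conjI ballI allI impI)
    fix v' assume "v' \<notin> I"
    then show "w v' = z v'" using w1 u1 unfolding I'_def z'_def v_def by auto
  next
    fix v' assume "v' \<in> I"
    then show "f w v' = w v'"
    proof (cases "v' = v")
      case True then show ?thesis using fv wv by simp
    next
      case False then show ?thesis using w2 \<open>v' \<in> I\<close> unfolding I'_def by auto
    qed
  qed
qed

lemma cform_unique:
  fixes f :: "('v::finite) config \<Rightarrow> 'v config"
  assumes cf: "cform f \<rho>" and cv: "cover \<rho>" and I: "I \<noteq> UNIV"
    and o: "\<forall>v. v \<notin> I \<longrightarrow> w v = w' v"
    and fw: "\<forall>v\<in>I. f w v = w v" and fw': "\<forall>v\<in>I. f w' v = w' v"
  shows "w = w'"
proof -
  have b: "bij \<rho>" using cf cform_def by blast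
  define D where "D = {v. w v \<noteq> w' v}"
  have "\<forall>u. \<rho> u \<in> D \<longrightarrow> u \<in> D"
  proof (intro allI impI)
    fix u assume h: "\<rho> u \<in> D"
    then have "\<rho> u \<in> I" using o D_def by auto
    then have "f w (\<rho> u) \<noteq> f w' (\<rho> u)" using fw fw' h D_def by auto
    then have "(w u \<noteq> f (\<lambda>_. False) (\<rho> u)) \<noteq> (w' u \<noteq> f (\<lambda>_. False) (\<rho> u))"
      by (subst (asm) (1 2) cform_app[OF cf])
    then show "u \<in> D" using D_def by auto
  qed
  then have "D = {} \<or> D = UNIV" by (rule single[OF b cv])
  moreover have "D \<noteq> UNIV" using I o D_def by auto
  ultimately have "D = {}" by simp
  then show ?thesis unfolding D_def by (auto simp: fun_eq_iff)
qed

lemma glue_out: "v \<notin> I \<Longrightarrow> glue I x z v = z v"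
  by (simp add: glue_def)

lemma glue_in: "v \<in> I \<Longrightarrow> glue I x z v = x v"
  by (simp add: glue_def)

lemma subfix_D:
  assumes "x \<in> sub_fixpoints f I z" "v \<in> I"
  shows "f (glue I x z) v = glue I x z v"
proof -
  have "subnet f I z x = x" using assms(1) sub_fixpoints_def by blast
  then have "subnet f I z x v = x v" by simp
  then show ?thesis using assms(2) by (simp add: subnet_def glue_def)
qed

lemma subfix_out:
  assumes "x \<in> sub_fixpoints f I z" "v \<notin> I"
  shows "x v = False"
  using assms unfolding sub_fixpoints_def confs_on_def by blast

lemma subfix_I:
  assumes "\<forall>v\<in>I. f w v = w v" "\<forall>v. v \<notin> I \<longrightarrow> w v = z v"
  shows "(\<lambda>v. if v \<in> I then w v else False) \<in> sub_fixpoints f I z"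
proof -
  let ?x = "\<lambda>v. if v \<in> I then w v else False"
  have g: "glue I ?x z = w" using assms(2) by (auto simp: glue_def fun_eq_iff)
  have "subnet f I z ?x = ?x" unfolding subnet_def g using assms(1) by (auto simp: fun_eq_iff)
  moreover have "?x \<in> confs_on I" by (simp add: confs_on_def)
  ultimately show ?thesis by (simp add: sub_fixpoints_def)
qed



lemma cform_two_fix:
  fixes f :: "('v::finite) config \<Rightarrow> 'v config"
  assumes cf: "cform f \<rho>" and cv: "cover \<rho>" and ev: "even (card {u. f (\<lambda>_. False) (\<rho> u)})"
  shows "2 \<le> card (fixpoints f)"
proof -
  obtain v0 :: 'v where True by simp
  have I: "- {v0} \<noteq> UNIV" by auto
  have fx: "\<exists>w. w v0 = b \<and> f w = w" for b
  proof -
    obtain w where w1: "\<forall>v. v \<notin> - {v0} \<longrightarrow> w v = (\<lambda>_. b) v" and w2: "\<forall>v\<in>- {v0}. f w v = w v"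
      using cform_exists[OF cf cv I, of "\<lambda>_. b"] by blast
    have "{v. w v \<noteq> f w v} \<subseteq> {v0}" using w2 by auto
    then have "card {v. w v \<noteq> f w v} \<le> card {v0}" by (intro card_mono) simp_all
    then have h1: "hamming w (f w) \<le> 1" unfolding hamming_def by simp
    moreover have "even (hamming w (f w))" using cform_parity[OF cf] ev by blast
    ultimately have "hamming w (f w) = 0" using h1 by (auto simp: le_Suc_eq)
    then have "f w = w" using hamming_0 by metis
    moreover have "w v0 = b" using w1 by auto
    ultimately show ?thesis by blast
  qed
  obtain w1 where a1: "w1 v0 = True" "f w1 = w1" using fx by blast
  obtain w2 where a2: "w2 v0 = False" "f w2 = w2" using fx by blast
  have "{w1, w2} \<subseteq> fixpoints f" using a1 a2 by (simp add: fixpoints_def)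
  moreover have "w1 \<noteq> w2" using a1 a2 by auto
  then have "card {w1, w2} = 2" by simp
  ultimately show ?thesis by (metis card_mono finite_UNIV rev_finite_subset subset_UNIV)
qed

lemma cform_no_fix:
  fixes f :: "('v::finite) config \<Rightarrow> 'v config"
  assumes cf: "cform f \<rho>" and od: "odd (card {u. f (\<lambda>_. False) (\<rho> u)})"
  shows "fixpoints f = {}"
proof (rule ccontr)
  assume "fixpoints f \<noteq> {}"
  then obtain x where "f x = x" by (auto simp: fixpoints_def)
  then have "hamming x (f x) = 0" by (simp add: hamming_0)
  then show False using cform_parity[OF cf, of x] od by simp
qed

lemma cform_sub_le1:
  fixes f :: "('v::finite) config \<Rightarrow> 'v config"
  assumes cf: "cform f \<rho>" and cv: "cover \<rho>" and I: "I \<noteq> UNIV"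
  shows "card (sub_fixpoints f I z) \<le> 1"
proof -
  have "x = y" if x: "x \<in> sub_fixpoints f I z" and y: "y \<in> sub_fixpoints f I z" for x y
  proof -
    have "glue I x z = glue I y z"
      by (rule cform_unique[OF cf cv I]) (auto simp: glue_out subfix_D[OF x] subfix_D[OF y])
    then have "\<forall>v\<in>I. x v = y v" by (metis glue_in)
    moreover have "\<forall>v. v \<notin> I \<longrightarrow> x v = y v" using subfix_out[OF x] subfix_out[OF y] by auto
    ultimately show ?thesis by (auto simp: fun_eq_iff)
  qed
  then show ?thesis by (simp add: card_le_Suc0_iff_eq)
qed

lemma cform_sub_ne:
  fixes f :: "('v::finite) config \<Rightarrow> 'v config"
  assumes cf: "cform f \<rho>" and cv: "cover \<rho>" and I: "I \<noteq> UNIV"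
  shows "sub_fixpoints f I z \<noteq> {}"
proof -
  obtain w where w1: "\<forall>v. v \<notin> I \<longrightarrow> w v = z v" and w2: "\<forall>v\<in>I. f w v = w v"
    using cform_exists[OF cf cv I] by blast
  show ?thesis using subfix_I[of I f w z, OF w2 w1] by blast
qed



lemma cform_arcs:
  fixes f :: "('v::finite) config \<Rightarrow> 'v config"
  assumes cf: "cform f \<rho>"
  shows "pos_arc f j i \<longleftrightarrow> (i = \<rho> j \<and> \<not> f (\<lambda>_. False) (\<rho> j))"
    and "neg_arc f j i \<longleftrightarrow> (i = \<rho> j \<and> f (\<lambda>_. False) (\<rho> j))"
proof -
  have b: "bij \<rho>" using cf cform_def by blast
  define u where "u = inv \<rho> i"
  have iu: "\<rho> u = i" using b u_def by (simp add: bij_inv_eq_iff)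
  define c where "c = f (\<lambda>_. False) i"
  have fy: "f y i = (y u \<noteq> c)" for y using cform_app[OF cf, of y u] iu c_def by simp
  have ju: "i = \<rho> j \<longleftrightarrow> j = u" using b iu by (metis bij_inv_eq_iff u_def)
  show "pos_arc f j i \<longleftrightarrow> (i = \<rho> j \<and> \<not> f (\<lambda>_. False) (\<rho> j))"
  proof (cases "j = u")
    case True
    then show ?thesis unfolding pos_arc_def fy using iu c_def by auto
  next
    case False
    then show ?thesis unfolding pos_arc_def fy using ju by auto
  qed
  show "neg_arc f j i \<longleftrightarrow> (i = \<rho> j \<and> f (\<lambda>_. False) (\<rho> j))"
  proof (cases "j = u")
    case True
    then show ?thesis unfolding neg_arc_def fy using iu c_def by auto
  next
    case False
    then show ?thesis unfolding neg_arc_def fy using ju by auto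
  qed
qed

lemma funpow_period:
  assumes "(g ^^ q) v0 = v0" "q > 0"
  shows "(g ^^ t) v0 \<in> (\<lambda>k. (g ^^ k) v0) ` {..<q}"
proof (induction t rule: less_induct)
  case (less t)
  show ?case
  proof (cases "t < q")
    case True then show ?thesis by auto
  next
    case False
    then have "t = (t - q) + q" by simp
    then have "(g ^^ t) v0 = (g ^^ (t - q)) ((g ^^ q) v0)" by (metis funpow_add comp_apply)
    also have "\<dots> = (g ^^ (t - q)) v0" using assms(1) by simp
    finally show ?thesis using less.IH[of "t - q"] assms(2) False by simp
  qed
qed

lemma orbit_enum:
  fixes \<rho> :: "'v::finite \<Rightarrow> 'v"
  assumes b: "bij \<rho>" and v0: "\<forall>v. \<exists>t. (\<rho> ^^ t) v0 = v"
  defines "n \<equiv> card (UNIV :: 'v set)"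
  shows "bij_betw (\<lambda>k. (\<rho> ^^ k) v0) {..<n} UNIV \<and> (\<rho> ^^ n) v0 = v0"
proof -
  let ?s = "\<lambda>k. (\<rho> ^^ k) v0"
  have inj: "inj (\<rho> ^^ k)" for k using b by (simp add: bij_is_inj inj_fn)
  have per: "?s (b' - a) = v0" if "?s a = ?s b'" "a < b'" for a b'
  proof -
    have "?s b' = (\<rho> ^^ a) (?s (b' - a))" using that(2)
      by (metis funpow_add comp_apply le_add_diff_inverse less_imp_le)
    then have "(\<rho> ^^ a) (?s (b' - a)) = (\<rho> ^^ a) v0" using that(1) by simp
    then show ?thesis using inj[of a] by (simp add: inj_eq)
  qed
  have big: "n \<le> q" if "?s q = v0" "q > 0" for q
  proof -
    have "UNIV \<subseteq> ?s ` {..<q}"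
    proof
      fix v :: 'v
      obtain t where "?s t = v" using v0 by blast
      then show "v \<in> ?s ` {..<q}" using funpow_period[OF that] by blast
    qed
    then have "card (UNIV :: 'v set) \<le> card (?s ` {..<q})" by (intro card_mono) simp_all
    also have "\<dots> \<le> q" using card_image_le[of "{..<q}" ?s] by simp
    finally show ?thesis unfolding n_def .
  qed
  have injon: "inj_on ?s {..<n}"
  proof (rule inj_onI)
    fix a b' assume a: "a \<in> {..<n}" and b': "b' \<in> {..<n}" and e: "?s a = ?s b'"
    show "a = b'"
    proof (rule ccontr)
      assume "a \<noteq> b'"
      then consider "a < b'" | "b' < a" by linarith
      then show False
      proof cases
        case 1
        then have "n \<le> b' - a" using big[OF per[OF e 1]] by simp
        then show False using b' 1 by simp
      next
        case 2
        then have "n \<le> a - b'" using big[OF per[OF e[symmetric] 2]] by simp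
        then show False using a 2 by simp
      qed
    qed
  qed
  have im: "?s ` {..<n} = UNIV"
  proof -
    have "card (?s ` {..<n}) = n" using injon by (simp add: card_image)
    then show ?thesis unfolding n_def by (metis card_subset_eq finite_UNIV subset_UNIV)
  qed
  have bb: "bij_betw ?s {..<n} UNIV" using injon im by (simp add: bij_betw_def)
  have np: "n > 0" unfolding n_def by (simp add: finite_UNIV_card_ge_0)
  have "?s n \<in> ?s ` {..<n}" using im by simp
  then obtain k where k: "k < n" "?s n = ?s k" by auto
  have "k = 0"
  proof (rule ccontr)
    assume "k \<noteq> 0"
    have "?s (n - k) = v0" using per[OF k(2)[symmetric] k(1)] .
    then have "?s (n - k) = ?s 0" by simp
    moreover have "n - k \<in> {..<n}" "0 \<in> {..<n}" using \<open>k \<noteq> 0\<close> k(1) by auto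
    ultimately have "n - k = 0" using injon by (meson inj_on_eq_iff)
    then show False using k(1) by simp
  qed
  then have "?s n = v0" using k by simp
  then show ?thesis using bb by simp
qed

lemma cform_Gf:
  fixes f :: "('v::finite) config \<Rightarrow> 'v config"
  assumes cf: "cform f \<rho>" and cv: "cover \<rho>"
  shows "Gf_full_cycle f \<and> num_neg_arcs f = card {u. f (\<lambda>_. False) (\<rho> u)}"
proof -
  have b: "bij \<rho>" using cf cform_def by blast
  obtain v0 where v0: "\<forall>v. \<exists>t. (\<rho> ^^ t) v0 = v" using cv unfolding cover_def by (elim exE) blast
  define n where "n = card (UNIV :: 'v set)"
  define s where "s = (\<lambda>k. (\<rho> ^^ k) v0)"
  have oe: "bij_betw s {..<n} UNIV" "(\<rho> ^^ n) v0 = v0"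
    using orbit_enum[OF b v0] unfolding n_def s_def by auto
  have arcs: "arcs f = {(j, i). i = \<rho> j}"
    unfolding arcs_def using cform_arcs[OF cf] by auto
  have step: "s (Suc k mod n) = \<rho> (s k)" if "k < n" for k
  proof (cases "Suc k < n")
    case True then show ?thesis by (simp add: s_def)
  next
    case False
    then have "Suc k = n" using that by simp
    then have "s (Suc k mod n) = v0" by (simp add: s_def)
    also have "\<dots> = \<rho> (s k)" using oe(2) \<open>Suc k = n\<close>[symmetric] by (simp add: s_def)
    finally show ?thesis .
  qed
  have "arcs f = {(s k, s (Suc k mod n)) | k. k < n}"
  proof
    show "arcs f \<subseteq> {(s k, s (Suc k mod n)) | k. k < n}"
    proof
      fix p assume "p \<in> arcs f"
      then obtain j where p: "p = (j, \<rho> j)" using arcs by auto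
      obtain k where "k < n" "s k = j" using oe(1) by (metis UNIV_I bij_betw_iff_bijections lessThan_iff)
      then show "p \<in> {(s k, s (Suc k mod n)) | k. k < n}" using p step by auto
    qed
  next
    show "{(s k, s (Suc k mod n)) | k. k < n} \<subseteq> arcs f" using arcs step by auto
  qed
  then have hc: "hamiltonian_cycle (arcs f)"
    unfolding hamiltonian_cycle_def n_def using oe(1) n_def by blast
  have nb: "\<forall>j i. \<not> (pos_arc f j i \<and> neg_arc f j i)" using cform_arcs[OF cf] by auto
  have "{(j, i). neg_arc f j i} = (\<lambda>j. (j, \<rho> j)) ` {u. f (\<lambda>_. False) (\<rho> u)}"
    using cform_arcs(2)[OF cf] by auto
  moreover have "inj (\<lambda>j. (j, \<rho> j))" by (simp add: inj_def)
  ultimately have "num_neg_arcs f = card {u. f (\<lambda>_. False) (\<rho> u)}"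
    unfolding num_neg_arcs_def by (metis card_image inj_on_subset subset_UNIV)
  then show ?thesis using hc nb unfolding Gf_full_cycle_def by blast
qed



lemma dep_one:
  fixes f :: "('v::finite) config \<Rightarrow> 'v config"
  assumes h: "\<forall>j x. j \<noteq> u \<longrightarrow> f (x(j:=True)) i = f (x(j:=False)) i" and xy: "x u = y u"
  shows "f x i = f y i"
proof -
  have upd: "f (z(j:=b)) i = f z i" if "j \<noteq> u" for z j b
  proof -
    have "f (z(j:=b)) i = f (z(j:=z j)) i" using h that by (cases b; cases "z j") auto
    then show ?thesis by simp
  qed
  have ind: "finite A \<Longrightarrow> u \<notin> A \<Longrightarrow> f (\<lambda>v. if v \<in> A then y v else x v) i = f x i" for A
  proof (induction A rule: finite_induct)
    case empty then show ?case by simp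
  next
    case (insert a A)
    have "(\<lambda>v. if v \<in> insert a A then y v else x v) = (\<lambda>v. if v \<in> A then y v else x v)(a := y a)"
      by (auto simp: fun_eq_iff)
    then have "f (\<lambda>v. if v \<in> insert a A then y v else x v) i = f ((\<lambda>v. if v \<in> A then y v else x v)(a := y a)) i"
      by (simp only:)
    also have "\<dots> = f (\<lambda>v. if v \<in> A then y v else x v) i"
      by (rule upd) (use insert.prems in auto)
    finally have "f (\<lambda>v. if v \<in> insert a A then y v else x v) i = f (\<lambda>v. if v \<in> A then y v else x v) i" .
    then show ?case using insert by simp
  qed
  have "(\<lambda>v. if v \<in> UNIV - {u} then y v else x v) = y" using xy by (auto simp: fun_eq_iff)
  moreover have "finite (UNIV - {u})" by (rule finite_subset[of _ UNIV]) auto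
  ultimately show ?thesis using ind[of "UNIV - {u}"] by simp
qed

lemma Gf_cform:
  fixes f :: "('v::finite) config \<Rightarrow> 'v config"
  assumes G: "Gf_full_cycle f"
  shows "\<exists>\<rho>. cform f \<rho> \<and> cover \<rho>"
proof -
  define n where "n = card (UNIV :: 'v set)"
  have "hamiltonian_cycle (arcs f)" using G Gf_full_cycle_def by blast
  then obtain \<sigma> :: "nat \<Rightarrow> 'v" where bs: "bij_betw \<sigma> {..<n} UNIV"
    and ar: "arcs f = {(\<sigma> k, \<sigma> (Suc k mod n)) | k. k < n}"
    unfolding hamiltonian_cycle_def n_def by blast
  have np: "n > 0" unfolding n_def by (simp add: finite_UNIV_card_ge_0)
  define idx where "idx = (\<lambda>v. inv_into {..<n} \<sigma> v)"
  have idx1: "idx v < n" for v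
    using bs unfolding idx_def by (metis bij_betw_def inv_into_into lessThan_iff UNIV_I)
  have idx2: "\<sigma> (idx v) = v" for v
    using bs unfolding idx_def by (meson bij_betw_inv_into_right UNIV_I)
  have idx3: "k < n \<Longrightarrow> idx (\<sigma> k) = k" for k
    using bs unfolding idx_def by (simp add: bij_betw_inv_into_left)
  define \<rho> where "\<rho> = (\<lambda>v. \<sigma> (Suc (idx v) mod n))"
  have rs: "k < n \<Longrightarrow> \<rho> (\<sigma> k) = \<sigma> (Suc k mod n)" for k by (simp add: \<rho>_def idx3)
  have injs: "inj_on \<sigma> {..<n}" using bs bij_betw_def by blast
  have arc_iff: "(j, i) \<in> arcs f \<longleftrightarrow> i = \<rho> j" for j i
  proof
    assume "(j, i) \<in> arcs f"
    then obtain k where "k < n" "j = \<sigma> k" "i = \<sigma> (Suc k mod n)" using ar by auto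
    then show "i = \<rho> j" using rs by simp
  next
    assume "i = \<rho> j"
    then have "(j, i) = (\<sigma> (idx j), \<sigma> (Suc (idx j) mod n))" using idx2 \<rho>_def by simp
    then show "(j, i) \<in> arcs f" using ar idx1 by blast
  qed
  have modinj: "Suc a mod n = Suc b mod n \<Longrightarrow> a < n \<Longrightarrow> b < n \<Longrightarrow> a = b" for a b
    by (metis Suc_lessI mod_less mod_self nat.inject zero_neq_numeral Zero_not_Suc)
  have injr: "inj \<rho>"
  proof (rule injI)
    fix a b assume "\<rho> a = \<rho> b"
    then have "\<sigma> (Suc (idx a) mod n) = \<sigma> (Suc (idx b) mod n)" by (simp add: \<rho>_def)
    then have "Suc (idx a) mod n = Suc (idx b) mod n"
      using injs np by (meson inj_on_eq_iff lessThan_iff mod_less_divisor)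
    then have "idx a = idx b" using modinj idx1 by blast
    then show "a = b" using idx2 by metis
  qed
  have b: "bij \<rho>" using injr by (simp add: bij_def finite_UNIV_inj_surj)
  have it: "(\<rho> ^^ k) (\<sigma> 0) = \<sigma> (k mod n)" for k
  proof (induction k)
    case 0 then show ?case by simp
  next
    case (Suc k)
    have "(\<rho> ^^ Suc k) (\<sigma> 0) = \<rho> (\<sigma> (k mod n))" using Suc by simp
    also have "\<dots> = \<sigma> (Suc (k mod n) mod n)" using rs np by simp
    also have "\<dots> = \<sigma> (Suc k mod n)" by (simp add: mod_Suc_eq)
    finally show ?case .
  qed
  have cv: "cover \<rho>" unfolding cover_def
  proof (rule exI[of _ "\<sigma> 0"], rule allI)
    fix v
    have "(\<rho> ^^ idx v) (\<sigma> 0) = v" using it[of "idx v"] idx1[of v] idx2[of v] by simp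
    then show "\<exists>t. (\<rho> ^^ t) (\<sigma> 0) = v" by blast
  qed
  have cf: "f x (\<rho> u) = (x u \<noteq> f (\<lambda>_. False) (\<rho> u))" for x u
  proof -
    define i where "i = \<rho> u"
    have noarc: "\<forall>j x. j \<noteq> u \<longrightarrow> f (x(j:=True)) i = f (x(j:=False)) i"
    proof (intro allI impI)
      fix j x assume "j \<noteq> u"
      then have "i \<noteq> \<rho> j" using injr i_def by (metis injD)
      then have "(j, i) \<notin> arcs f" using arc_iff by blast
      then have "\<not> pos_arc f j i" "\<not> neg_arc f j i" by (auto simp: arcs_def)
      then show "f (x(j:=True)) i = f (x(j:=False)) i" unfolding pos_arc_def neg_arc_def by blast
    qed
    define g where "g = (\<lambda>b. f ((\<lambda>_. False)(u := b)) i)"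
    have fg: "f y i = g (y u)" for y unfolding g_def by (rule dep_one[of u f i, OF noarc]) simp
    have "(u, i) \<in> arcs f" using arc_iff i_def by simp
    then have "pos_arc f u i \<or> neg_arc f u i" by (simp add: arcs_def)
    then have "(g True \<and> \<not> g False) \<or> (\<not> g True \<and> g False)"
      unfolding pos_arc_def neg_arc_def fg by auto
    moreover have "f (\<lambda>_. False) i = g False" using fg by simp
    ultimately show ?thesis using fg[of x] i_def by (cases "x u") auto
  qed
  have "cform f \<rho>" unfolding cform_def using b cf by blast
  then show ?thesis using cv by blast
qed



lemma two_distinct:
  assumes "finite S" "2 \<le> card S" shows "\<exists>a b. a \<in> S \<and> b \<in> S \<and> a \<noteq> b"
proof (rule ccontr)
  assume "\<not> ?thesis"
  then have "card S \<le> Suc 0" using assms(1) by (auto simp: card_le_Suc0_iff_eq)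
  then show False using assms(2) by simp
qed

lemma diff_eq_imp_eq:
  fixes x y a :: "'v config"
  assumes "{v. x v \<noteq> a v} = {v. y v \<noteq> a v}" shows "x = y"
proof
  fix v
  have "v \<in> {v. x v \<noteq> a v} \<longleftrightarrow> v \<in> {v. y v \<noteq> a v}" using assms by simp
  then have "(x v \<noteq> a v) = (y v \<noteq> a v)" by simp
  then show "x v = y v" by (metis (full_types))
qed

lemma two_crit_cform:
  fixes f :: "('v::finite) config \<Rightarrow> 'v config"
  assumes tc: "two_critical f" and ne: "non_expansive f"
  shows "\<exists>\<rho>. cform f \<rho> \<and> cover \<rho>"
proof -
  have nexp: "hamming (f x) (f y) \<le> hamming x y" for x y using ne non_expansive_def by blast
  have sub1: "card (sub_fixpoints f I z) \<le> 1" if "I \<noteq> {}" "I \<noteq> UNIV" "z \<in> confs_on (- I)" for I z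
    using tc that unfolding two_critical_def by blast
  have compl: "y = (\<lambda>v. \<not> x v)" if fx: "f x = x" and fy: "f y = y" and xy: "x \<noteq> y" for x y
  proof -
    define K where "K = {v. x v \<noteq> y v}"
    have Kne: "K \<noteq> {}" using xy K_def by (auto simp: fun_eq_iff)
    have "K = UNIV"
    proof (rule ccontr)
      assume KU: "K \<noteq> UNIV"
      define z where "z = (\<lambda>v. if v \<in> K then False else x v)"
      have zc: "z \<in> confs_on (- K)" by (simp add: z_def confs_on_def)
      have s1: "(\<lambda>v. if v \<in> K then x v else False) \<in> sub_fixpoints f K z"
        by (rule subfix_I) (use fx z_def in auto)
      have s2: "(\<lambda>v. if v \<in> K then y v else False) \<in> sub_fixpoints f K z"
        by (rule subfix_I) (use fy z_def K_def in auto)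
      obtain v where "v \<in> K" using Kne by blast
      then have "(\<lambda>v. if v \<in> K then x v else False) \<noteq> (\<lambda>v. if v \<in> K then y v else False)"
        using K_def by (auto simp: fun_eq_iff)
      then have "card {(\<lambda>v. if v \<in> K then x v else False), (\<lambda>v. if v \<in> K then y v else False)} = 2" by simp
      moreover have "card {(\<lambda>v. if v \<in> K then x v else False), (\<lambda>v. if v \<in> K then y v else False)}
          \<le> card (sub_fixpoints f K z)" using s1 s2 by (intro card_mono) simp_all
      ultimately show False using sub1[OF Kne KU zc] by simp
    qed
    then show ?thesis using K_def by (auto simp: fun_eq_iff)
  qed
  have c2: "2 \<le> card (fixpoints f)" using tc two_critical_def by blast
  have "finite (fixpoints f)" by simp
  from two_distinct[OF this c2] obtain a b where "a \<in> fixpoints f" "b \<in> fixpoints f" "a \<noteq> b" by blast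
  then have fa: "f a = a" and fb: "f b = b" and ab: "a \<noteq> b" by (auto simp: fixpoints_def)
  define na where "na = (\<lambda>v. \<not> a v)"
  have fna: "f na = na" using compl[OF fa fb ab] fb na_def by simp
  have fixes_only: "x = a \<or> x = na" if "f x = x" for x using compl[OF fa that] na_def by blast
  have lev: "hamming (f x) a = hamming x a" for x
  proof -
    have "hamming (f x) a \<le> hamming x a" using nexp[of x a] fa by simp
    moreover have "hamming (f x) na \<le> hamming x na" using nexp[of x na] fna by simp
    moreover have "hamming (f x) a + hamming (f x) na = hamming x a + hamming x na"
      using hamming_compl[of "f x" a] hamming_compl[of x a] na_def by simp
    ultimately show ?thesis by linarith
  qed
  define \<Delta> where "\<Delta> = (\<lambda>x. {v. x v \<noteq> a v})"
  have hD: "hamming x a = card (\<Delta> x)" for x by (simp add: hamming_def \<Delta>_def)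
  have ex1: "\<exists>k. \<Delta> (f (a(j := \<not> a j))) = {k}" for j
  proof -
    have "hamming a (a(j := \<not> a j)) = 1" using hamming_flip[of a a j] hamming_0[of a a] by simp
    then have "hamming (a(j := \<not> a j)) a = 1" by (metis hamming_sym)
    then have "card (\<Delta> (f (a(j := \<not> a j)))) = 1" using lev hD by metis
    then show ?thesis by (meson card_1_singletonE)
  qed
  define \<tau> where "\<tau> = (\<lambda>j. SOME k. \<Delta> (f (a(j := \<not> a j))) = {k})"
  have tau1: "\<Delta> (f (a(j := \<not> a j))) = {\<tau> j}" for j
    unfolding \<tau>_def using someI_ex[OF ex1[of j]] .
  have tau2: "f (a(j := \<not> a j)) = a(\<tau> j := \<not> a (\<tau> j))" for j
  proof (rule diff_eq_imp_eq[where a=a])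
    show "{v. f (a(j := \<not> a j)) v \<noteq> a v} = {v. (a(\<tau> j := \<not> a (\<tau> j))) v \<noteq> a v}"
      using tau1[of j] unfolding \<Delta>_def by auto
  qed
  have P: "f x (\<tau> j) \<noteq> a (\<tau> j)" if "x j \<noteq> a j" for x j
  proof (rule ccontr)
    assume c: "\<not> f x (\<tau> j) \<noteq> a (\<tau> j)"
    have h1: "hamming x (a(j := \<not> a j)) = hamming x a - 1" using hamming_flip[of x a j] that by simp
    have h0: "hamming x a \<ge> 1" using hamming_pos[of x j a, OF that] .
    have "hamming (f x) (a(\<tau> j := \<not> a (\<tau> j))) = Suc (hamming (f x) a)"
      using hamming_flip[of "f x" a "\<tau> j"] c by simp
    moreover have "hamming (f x) (f (a(j := \<not> a j))) \<le> hamming x a - 1" using nexp h1 by metis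
    ultimately show False using tau2[of j] lev[of x] h0 by simp
  qed
  have sup: "\<tau> ` \<Delta> x \<subseteq> \<Delta> (f x)" for x using P \<Delta>_def by auto
  have cardD: "card (\<Delta> (f x)) = card (\<Delta> x)" for x using lev hD by metis
  have closed: "Q = UNIV" if "Q \<noteq> {}" "\<tau> ` Q \<subseteq> Q" for Q
    using that
  proof (induction "card Q" arbitrary: Q rule: less_induct)
    case less
    show ?case
    proof (cases "card (\<tau> ` Q) = card Q")
      case True
      define x where "x = (\<lambda>v. if v \<in> Q then \<not> a v else a v)"
      have dx: "\<Delta> x = Q" by (auto simp: x_def \<Delta>_def)
      have "\<Delta> (f x) = \<tau> ` Q"
        using sup[of x] cardD[of x] True dx by (metis card_subset_eq finite)
      then have "\<Delta> (f x) = Q"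
        using less.prems(2) True by (metis card_subset_eq finite)
      then have "f x = x" using dx unfolding \<Delta>_def by (intro diff_eq_imp_eq[where a=a]) simp
      then have "x = a \<or> x = na" by (rule fixes_only)
      then show ?thesis
      proof
        assume "x = a" then have "Q = {}" using dx \<Delta>_def by auto
        then show ?thesis using less.prems(1) by simp
      next
        assume "x = na" then show "Q = UNIV" using dx \<Delta>_def na_def by auto
      qed
    next
      case False
      then have lt: "card (\<tau> ` Q) < card Q" using card_image_le[of Q \<tau>] by simp
      have "\<tau> ` Q \<noteq> {}" using less.prems(1) by simp
      moreover have "\<tau> ` (\<tau> ` Q) \<subseteq> \<tau> ` Q" using less.prems(2) by auto
      ultimately have "\<tau> ` Q = UNIV" using less.hyps[OF lt] by blast
      then show ?thesis using less.prems(2) by auto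
    qed
  qed
  have "range \<tau> = UNIV" using closed[of "range \<tau>"] by auto
  then have bt: "bij \<tau>" by (simp add: bij_def finite_UNIV_surj_inj)
  obtain j0 :: 'v where True by simp
  have "range (\<lambda>t. (\<tau> ^^ t) j0) = UNIV"
  proof (rule closed)
    show "range (\<lambda>t. (\<tau> ^^ t) j0) \<noteq> {}" by simp
    show "\<tau> ` range (\<lambda>t. (\<tau> ^^ t) j0) \<subseteq> range (\<lambda>t. (\<tau> ^^ t) j0)"
    proof
      fix v assume "v \<in> \<tau> ` range (\<lambda>t. (\<tau> ^^ t) j0)"
      then obtain t where "v = \<tau> ((\<tau> ^^ t) j0)" by auto
      then have "v = (\<tau> ^^ Suc t) j0" by simp
      then show "v \<in> range (\<lambda>t. (\<tau> ^^ t) j0)" by blast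
    qed
  qed
  then have cv: "cover \<tau>" unfolding cover_def by (metis UNIV_I imageE)
  have eqD: "\<Delta> (f x) = \<tau> ` \<Delta> x" for x
  proof -
    have "card (\<tau> ` \<Delta> x) = card (\<Delta> x)" using bt by (metis bij_is_inj card_image inj_on_subset subset_UNIV)
    then show ?thesis using sup[of x] cardD[of x] by (metis card_subset_eq finite)
  qed
  have key: "(f x (\<tau> u) \<noteq> a (\<tau> u)) = (x u \<noteq> a u)" for x u
  proof -
    have "(f x (\<tau> u) \<noteq> a (\<tau> u)) = (\<tau> u \<in> \<Delta> (f x))" by (simp add: \<Delta>_def)
    also have "\<dots> = (\<tau> u \<in> \<tau> ` \<Delta> x)" using eqD by simp
    also have "\<dots> = (u \<in> \<Delta> x)" using bt by (simp add: bij_is_inj inj_image_mem_iff)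
    finally show ?thesis by (simp add: \<Delta>_def)
  qed
  have "f x (\<tau> u) = (x u \<noteq> f (\<lambda>_. False) (\<tau> u))" for x u
    using key[of x u] key[of "\<lambda>_. False" u] by auto
  then have "cform f \<tau>" unfolding cform_def using bt by blast
  then show ?thesis using cv by blast
qed



lemma card_sum_ind:
  assumes "finite A" shows "card {x\<in>A. P x} = (\<Sum>x\<in>A. if P x then 1 else 0 :: nat)"
  using assms by (simp add: sum.If_cases Int_def)

lemma sum_shift_periodic:
  fixes g :: "nat \<Rightarrow> nat"
  assumes "g p = g 0"
  shows "(\<Sum>t<p. g (Suc t)) = (\<Sum>t<p. g t)"
  using sum.lessThan_Suc[of g p] sum.lessThan_Suc_shift[of g p] assms by simp

lemma zc_exists:
  fixes f :: "('v::finite) config \<Rightarrow> 'v config"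
  assumes zc: "zero_critical f" and I: "I \<noteq> UNIV"
  shows "\<exists>w. (\<forall>v. v \<notin> I \<longrightarrow> w v = z v) \<and> (\<forall>v\<in>I. f w v = w v)"
proof (cases "I = {}")
  case True then show ?thesis by auto
next
  case False
  define z' where "z' = (\<lambda>v. if v \<in> I then False else z v)"
  have "z' \<in> confs_on (- I)" by (simp add: z'_def confs_on_def)
  then have "sub_fixpoints f I z' \<noteq> {}" using zc False I unfolding zero_critical_def by blast
  then obtain x where x: "x \<in> sub_fixpoints f I z'" by blast
  show ?thesis
  proof (intro exI conjI allI impI ballI)
    fix v assume "v \<notin> I" then show "glue I x z' v = z v" by (simp add: glue_def z'_def)
  next
    fix v assume "v \<in> I" then show "f (glue I x z') v = glue I x z' v" by (rule subfix_D[OF x])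
  qed
qed



lemma zc_orbit:
  fixes f :: "('v::finite) config \<Rightarrow> 'v config"
  assumes zc: "zero_critical f" and ne: "non_expansive f"
  shows "\<exists>c p. p > 0 \<and> (\<forall>k. c (Suc k) = f (c k)) \<and> (\<forall>k. c (k + p) = c k)
     \<and> (\<forall>k. hamming (c k) (c (Suc k)) = 1)"
proof -
  have nexp: "hamming (f x) (f y) \<le> hamming x y" for x y using ne non_expansive_def by blast
  have nofix: "f x \<noteq> x" for x using zc unfolding zero_critical_def fixpoints_def by auto
  obtain v0 :: 'v where True by simp
  have "- {v0} \<noteq> UNIV" by auto
  from zc_exists[OF zc this, of "\<lambda>_. False"] obtain y where
    y2: "\<forall>v\<in>- {v0}. f y v = y v" by blast
  have "{u. y u \<noteq> f y u} \<subseteq> {v0}" using y2 by auto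
  then have "card {u. y u \<noteq> f y u} \<le> card {v0}" by (intro card_mono) simp_all
  then have "hamming y (f y) \<le> 1" by (simp add: hamming_def)
  moreover have "hamming y (f y) \<noteq> 0" using nofix hamming_0 by metis
  ultimately have hy: "hamming y (f y) = 1" by simp
  define Y where "Y = (\<lambda>t. (f ^^ t) y)"
  have Y1: "hamming (Y t) (Y (Suc t)) = 1" for t
  proof (induction t)
    case 0 then show ?case using hy by (simp add: Y_def)
  next
    case (Suc t)
    have "hamming (Y (Suc t)) (Y (Suc (Suc t))) \<le> hamming (Y t) (Y (Suc t))"
      using nexp[of "Y t" "Y (Suc t)"] by (simp add: Y_def)
    moreover have "hamming (Y (Suc t)) (Y (Suc (Suc t))) \<noteq> 0"
      using nofix[of "Y (Suc t)"] hamming_0 by (metis Y_def comp_apply funpow.simps(2))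
    ultimately show ?case using Suc by simp
  qed
  have "\<not> inj Y"
  proof
    assume iY: "inj Y"
    have fr: "finite (range Y)" by simp
    from finite_imageD[OF fr iY] show False by simp
  qed
  then obtain s t where st: "Y s = Y t" "s \<noteq> t" unfolding inj_def by blast
  then obtain s t where st: "Y s = Y t" "s < t" by (metis linorder_neqE_nat)
  define p where "p = t - s"
  define c where "c = (\<lambda>k. Y (s + k))"
  have pp: "p > 0" using st p_def by simp
  have cS: "c (Suc k) = f (c k)" for k by (simp add: c_def Y_def)
  have cP: "c (k + p) = c k" for k
  proof (induction k)
    case 0 then show ?case using st p_def c_def by simp
  next
    case (Suc k)
    have "c (Suc k + p) = f (c (k + p))" using cS[of "k + p"] by simp
    then show ?case using Suc cS by simp
  qed
  have c1: "hamming (c k) (c (Suc k)) = 1" for k using Y1[of "s + k"] by (simp add: c_def)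
  show ?thesis using pp cS cP c1 by blast
qed

locale zcs =
  fixes f :: "('v::finite) config \<Rightarrow> 'v config" and c :: "nat \<Rightarrow> 'v config" and p :: nat
  assumes zc: "zero_critical f" and ne: "non_expansive f" and pp: "p > 0"
    and cS: "\<And>k. c (Suc k) = f (c k)" and cP: "\<And>k. c (k + p) = c k"
    and c1: "\<And>k. hamming (c k) (c (Suc k)) = 1"
begin

lemma nexp: "hamming (f x) (f y) \<le> hamming x y" using ne non_expansive_def by blast

lemma nofix: "f x \<noteq> x" using zc unfolding zero_critical_def fixpoints_def by auto

lemma cM: "c k = c (k mod p)"
proof (induction k rule: less_induct)
  case (less k)
  show ?case
  proof (cases "k < p")
    case True then show ?thesis by simp
  next
    case False
    then have "c k = c ((k - p) + p)" by simp
    also have "\<dots> = c (k - p)" by (rule cP)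
    also have "\<dots> = c ((k - p) mod p)" using less.IH[of "k - p"] pp False by simp
    also have "(k - p) mod p = k mod p" using False by (simp add: le_mod_geq)
    finally show ?thesis .
  qed
qed

definition Phi :: "'v config \<Rightarrow> nat" where "Phi x = (\<Sum>t<p. hamming x (c t))"

lemma ineq: "hamming (f x) (c (Suc t)) \<le> hamming x (c t)"
  using nexp[of x "c t"] cS by simp

lemma shift: "(\<Sum>t<p. hamming z (c (Suc t))) = Phi z"
  unfolding Phi_def by (rule sum_shift_periodic) (metis cP add_0)

lemma Phi_dec: "Phi (f x) \<le> Phi x"
proof -
  have "Phi (f x) = (\<Sum>t<p. hamming (f x) (c (Suc t)))" using shift by simp
  also have "\<dots> \<le> (\<Sum>t<p. hamming x (c t))" by (rule sum_mono) (rule ineq)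
  finally show ?thesis unfolding Phi_def .
qed

definition g :: "'v \<Rightarrow> bool \<Rightarrow> nat" where "g v b = card {t\<in>{..<p}. c t v \<noteq> b}"

lemma Phi_split: "Phi x = (\<Sum>v\<in>UNIV. g v (x v))"
proof -
  have h: "hamming x (c t) = (\<Sum>v\<in>UNIV. if x v \<noteq> c t v then 1 else 0)" for t
  proof -
    have "hamming x (c t) = card {v\<in>UNIV. x v \<noteq> c t v}" unfolding hamming_def by simp
    also have "\<dots> = (\<Sum>v\<in>UNIV. if x v \<noteq> c t v then 1 else 0)" by (rule card_sum_ind) simp
    finally show ?thesis .
  qed
  have h2: "g v (x v) = (\<Sum>t\<in>{..<p}. if c t v \<noteq> x v then 1 else 0)" for v
    unfolding g_def by (rule card_sum_ind) simp
  have "Phi x = (\<Sum>t<p. \<Sum>v\<in>UNIV. if x v \<noteq> c t v then 1 else 0)"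
    unfolding Phi_def by (simp only: h)
  also have "\<dots> = (\<Sum>v\<in>UNIV. \<Sum>t<p. if x v \<noteq> c t v then 1 else 0)"
    by (rule sum.swap)
  also have "\<dots> = (\<Sum>v\<in>UNIV. \<Sum>t<p. if c t v \<noteq> x v then 1 else 0)"
    by (intro sum.cong refl) auto
  also have "\<dots> = (\<Sum>v\<in>UNIV. g v (x v))"
    by (simp only: h2)
  finally show ?thesis .
qed

lemma balance: "g v True = g v False"
proof (rule ccontr)
  assume nb: "g v True \<noteq> g v False"
  define U where "U = {v. g v True \<noteq> g v False}"
  have Une: "U \<noteq> {}" using nb U_def by auto
  define m where "m = (\<lambda>v. g v True < g v False)"
  have mmin: "g u (m u) < g u b" if "u \<in> U" "b \<noteq> m u" for u b
    using that unfolding U_def m_def by (cases b) auto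
  have "- U \<noteq> UNIV" using Une by auto
  from zc_exists[OF zc this, of m] obtain w where
    w1: "\<forall>u. u \<notin> - U \<longrightarrow> w u = m u" and w2: "\<forall>u\<in>- U. f w u = w u" by blast
  obtain u where u: "f w u \<noteq> w u" using nofix[of w] by (auto simp: fun_eq_iff)
  then have uU: "u \<in> U" using w2 by auto
  have "Phi w < Phi (f w)"
    unfolding Phi_split
  proof (rule sum_strict_mono_ex1)
    show "finite (UNIV :: 'v set)" by simp
    show "\<forall>x\<in>UNIV. g x (w x) \<le> g x (f w x)"
    proof
      fix x :: 'v
      show "g x (w x) \<le> g x (f w x)"
      proof (cases "x \<in> U")
        case True
        then show ?thesis using mmin[of x "f w x"] w1 by (cases "f w x = m x") auto
      next
        case False then show ?thesis using w2 by simp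
      qed
    qed
    have wu: "w u = m u" using w1 uU by auto
    then have "g u (w u) < g u (f w u)" using mmin[OF uU, of "f w u"] u by simp
    then show "\<exists>x\<in>UNIV. g x (w x) < g x (f w x)" by blast
  qed
  then show False using Phi_dec[of w] by simp
qed

lemma Phi_const: "Phi x = Phi y"
proof -
  have hx: "g v (x v) = g v False" for v using balance[of v] by (cases "x v") auto
  have hy: "g v (y v) = g v False" for v using balance[of v] by (cases "y v") auto
  show ?thesis unfolding Phi_split using hx hy by simp
qed

lemma eqn: "hamming (f x) (c (Suc t)) = hamming x (c t)"
proof -
  have a: "hamming (f x) (c (Suc t')) = hamming x (c t')" if "t' < p" for t'
  proof (rule sum_mono_inv[where I="{..<p}" and f="\<lambda>t. hamming (f x) (c (Suc t))"])
    show "(\<Sum>t<p. hamming (f x) (c (Suc t))) = (\<Sum>t<p. hamming x (c t))"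
      using shift[of "f x"] Phi_const[of "f x" x] unfolding Phi_def by simp
    show "\<And>i. i \<in> {..<p} \<Longrightarrow> hamming (f x) (c (Suc i)) \<le> hamming x (c i)" by (rule ineq)
  qed (use that in auto)
  have "c (Suc t) = c (Suc (t mod p))"
    using cM[of "Suc t"] cM[of "Suc (t mod p)"] by (simp add: mod_Suc_eq)
  moreover have "c t = c (t mod p)" by (rule cM)
  ultimately show ?thesis using a[of "t mod p"] pp by simp
qed

end



context zcs
begin

definition \<delta> :: "nat \<Rightarrow> 'v" where "\<delta> t = (SOME v. {u. c t u \<noteq> c (Suc t) u} = {v})"

lemma delta_set: "{u. c t u \<noteq> c (Suc t) u} = {\<delta> t}"
proof -
  have "card {u. c t u \<noteq> c (Suc t) u} = 1" using c1[of t] by (simp add: hamming_def)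
  then have "\<exists>v. {u. c t u \<noteq> c (Suc t) u} = {v}" by (meson card_1_singletonE)
  then show ?thesis unfolding \<delta>_def by (rule someI_ex)
qed

lemma c_step: "c (Suc t) = (c t)(\<delta> t := \<not> c t (\<delta> t))"
proof
  fix v
  have "v \<in> {u. c t u \<noteq> c (Suc t) u} \<longleftrightarrow> v = \<delta> t" using delta_set by simp
  then show "c (Suc t) v = ((c t)(\<delta> t := \<not> c t (\<delta> t))) v"
    by (cases "v = \<delta> t") auto
qed

lemma ham_step:
  "hamming x (c (Suc t)) = (if x (\<delta> t) = c t (\<delta> t) then Suc (hamming x (c t)) else hamming x (c t) - 1)"
  by (subst c_step) (rule hamming_flip)

lemma lit: "(f x (\<delta> (Suc t)) = c (Suc t) (\<delta> (Suc t))) \<longleftrightarrow> (x (\<delta> t) = c t (\<delta> t))"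
proof -
  define A where "A = hamming x (c t)"
  have e1: "hamming (f x) (c (Suc t)) = A" using eqn A_def by simp
  have e2: "hamming (f x) (c (Suc (Suc t))) = hamming x (c (Suc t))" using eqn by simp
  have l: "hamming (f x) (c (Suc (Suc t))) =
     (if f x (\<delta> (Suc t)) = c (Suc t) (\<delta> (Suc t)) then Suc A else A - 1)"
    using ham_step[of "f x" "Suc t"] e1 by simp
  have r: "hamming x (c (Suc t)) = (if x (\<delta> t) = c t (\<delta> t) then Suc A else A - 1)"
    using ham_step[of x t] A_def by simp
  show ?thesis using e2 l r by (auto split: if_splits)
qed

lemma g_sum: "g v True + g v False = p"
proof -
  have "{t\<in>{..<p}. c t v \<noteq> True} \<union> {t\<in>{..<p}. c t v \<noteq> False} = {..<p}" by auto
  moreover have "{t\<in>{..<p}. c t v \<noteq> True} \<inter> {t\<in>{..<p}. c t v \<noteq> False} = {}" by auto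
  ultimately have "card {t\<in>{..<p}. c t v \<noteq> True} + card {t\<in>{..<p}. c t v \<noteq> False} = card {..<p::nat}"
    using card_Un_disjoint[of "{t\<in>{..<p}. c t v \<noteq> True}" "{t\<in>{..<p}. c t v \<noteq> False}"] by simp
  then show ?thesis unfolding g_def by simp
qed

lemma allv: "\<exists>t. \<delta> t = v"
proof -
  have gt: "g v True > 0" "g v False > 0" using g_sum[of v] balance[of v] pp by auto
  have "{t\<in>{..<p}. c t v \<noteq> True} \<noteq> {}" using gt(1) unfolding g_def by (metis card.empty less_irrefl)
  then obtain t1 where t1: "\<not> c t1 v" by auto
  have "{t\<in>{..<p}. c t v \<noteq> False} \<noteq> {}" using gt(2) unfolding g_def by (metis card.empty less_irrefl)
  then obtain t2 where t2: "c t2 v" by auto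
  have "\<exists>t. c t v \<noteq> c (Suc t) v"
  proof (rule ccontr)
    assume "\<not> ?thesis"
    then have "c t v = c 0 v" for t by (induction t) auto
    then show False using t1 t2 by metis
  qed
  then obtain t where "c t v \<noteq> c (Suc t) v" by blast
  then have "v \<in> {u. c t u \<noteq> c (Suc t) u}" by simp
  then have "v \<in> {\<delta> t}" by (simp only: delta_set)
  then show ?thesis by auto
qed

lemma delta_per: "\<delta> (t + p) = \<delta> t"
  unfolding \<delta>_def using cP[of t] cP[of "Suc t"] by simp

lemma has_pred: "\<exists>t. \<delta> (Suc t) = w"
proof -
  obtain t0 where "\<delta> t0 = w" using allv by blast
  then have "\<delta> (t0 + p) = w" using delta_per by simp
  moreover have "t0 + p = Suc (t0 + p - 1)" using pp by simp
  ultimately show ?thesis by metis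
qed

lemma pinj: "\<delta> (Suc s) = \<delta> (Suc t) \<Longrightarrow> \<delta> s = \<delta> t"
proof (rule ccontr)
  assume e: "\<delta> (Suc s) = \<delta> (Suc t)" and ne: "\<delta> s \<noteq> \<delta> t"
  define w where "w = \<delta> (Suc s)"
  define x1 :: "'v config" where "x1 = (\<lambda>_. False)"
  define x2 where "x2 = x1(\<delta> s := True)"
  have a1: "(f x1 w = c (Suc s) w) \<longleftrightarrow> (x1 (\<delta> s) = c s (\<delta> s))" using lit[of x1 s] w_def by simp
  have a2: "(f x2 w = c (Suc s) w) \<longleftrightarrow> (x2 (\<delta> s) = c s (\<delta> s))" using lit[of x2 s] w_def by simp
  have b1: "(f x1 w = c (Suc t) w) \<longleftrightarrow> (x1 (\<delta> t) = c t (\<delta> t))" using lit[of x1 t] w_def e by simp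
  have b2: "(f x2 w = c (Suc t) w) \<longleftrightarrow> (x2 (\<delta> t) = c t (\<delta> t))" using lit[of x2 t] w_def e by simp
  have "x1 (\<delta> t) = x2 (\<delta> t)" using ne by (simp add: x2_def)
  then have "f x1 w = f x2 w" using b1 b2 by (metis (full_types))
  moreover have "x1 (\<delta> s) \<noteq> x2 (\<delta> s)" by (simp add: x1_def x2_def)
  ultimately show False using a1 a2 by (metis (full_types))
qed

definition \<pi> :: "'v \<Rightarrow> 'v" where "\<pi> w = \<delta> (SOME t. \<delta> (Suc t) = w)"

lemma pi_delta: "\<pi> (\<delta> (Suc t)) = \<delta> t"
proof -
  have "\<delta> (Suc (SOME t'. \<delta> (Suc t') = \<delta> (Suc t))) = \<delta> (Suc t)"
    by (rule someI_ex) blast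
  then show ?thesis unfolding \<pi>_def by (rule pinj)
qed

lemma pi_bij: "bij \<pi>"
proof -
  have "surj \<pi>"
  proof -
    have "u \<in> range \<pi>" for u
    proof -
      obtain t where "\<delta> t = u" using allv by blast
      then show ?thesis using pi_delta[of t] by (metis rangeI)
    qed
    then show ?thesis by auto
  qed
  then show ?thesis by (simp add: bij_def finite_UNIV_surj_inj)
qed

lemma rho_delta: "inv \<pi> (\<delta> t) = \<delta> (Suc t)"
  using pi_bij pi_delta by (metis bij_inv_eq_iff)

lemma result: "cform f (inv \<pi>) \<and> cover (inv \<pi>)"
proof -
  have b: "bij (inv \<pi>)" using pi_bij by (rule bij_imp_bij_inv)
  have it: "(inv \<pi> ^^ t) (\<delta> 0) = \<delta> t" for t by (induction t) (simp_all add: rho_delta)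
  have cv: "cover (inv \<pi>)" unfolding cover_def
  proof (rule exI[of _ "\<delta> 0"], rule allI)
    fix v obtain t where "\<delta> t = v" using allv by blast
    then show "\<exists>t. (inv \<pi> ^^ t) (\<delta> 0) = v" using it by blast
  qed
  have cf: "f x (inv \<pi> u) = (x u \<noteq> f (\<lambda>_. False) (inv \<pi> u))" for x u
  proof -
    obtain t where u: "\<delta> t = u" using allv by blast
    have r: "inv \<pi> u = \<delta> (Suc t)" using rho_delta[of t] unfolding u .
    have l1: "(f x (\<delta> (Suc t)) = c (Suc t) (\<delta> (Suc t))) \<longleftrightarrow> (x u = c t u)" using lit[of x t] u by simp
    have l2: "(f (\<lambda>_. False) (\<delta> (Suc t)) = c (Suc t) (\<delta> (Suc t))) \<longleftrightarrow> (False = c t u)"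
      using lit[of "\<lambda>_. False" t] u by simp
    show ?thesis unfolding r using l1 l2 by (metis (full_types))
  qed
  have "cform f (inv \<pi>)" unfolding cform_def using b cf by blast
  then show ?thesis using cv by blast
qed

end

lemma zero_crit_cform:
  fixes f :: "('v::finite) config \<Rightarrow> 'v config"
  assumes zc: "zero_critical f" and ne: "non_expansive f"
  shows "\<exists>\<rho>. cform f \<rho> \<and> cover \<rho>"
proof -
  obtain c p where h: "p > 0" "\<forall>k. c (Suc k) = f (c k)" "\<forall>k. c (k + p) = c k"
     "\<forall>k. hamming (c k) (c (Suc k)) = 1"
    using zc_orbit[OF zc ne] by blast
  interpret zcs f c p using zc ne h by unfold_locales auto
  show ?thesis using result by blast
qed



theorem theorem10:
  fixes f :: "('v::finite) config \<Rightarrow> 'v config"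
  shows "(positive_circular f \<longleftrightarrow> two_critical f \<and> non_expansive f)
       \<and> (negative_circular f \<longleftrightarrow> zero_critical f \<and> non_expansive f)"
proof (rule conjI; rule iffI)
  assume pc: "positive_circular f"
  then have G: "Gf_full_cycle f" and ev: "even (num_neg_arcs f)" by (auto simp: positive_circular_def)
  obtain \<rho> where cf: "cform f \<rho>" and cv: "cover \<rho>" using Gf_cform[OF G] by blast
  have ev2: "even (card {u. f (\<lambda>_. False) (\<rho> u)})" using cform_Gf[OF cf cv] ev by simp
  have "two_critical f" unfolding two_critical_def
    using cform_two_fix[OF cf cv ev2] cform_sub_le1[OF cf cv] by blast
  then show "two_critical f \<and> non_expansive f" using cform_nonexp[OF cf] by blast
next
  assume h: "two_critical f \<and> non_expansive f"
  obtain \<rho> where cf: "cform f \<rho>" and cv: "cover \<rho>" using two_crit_cform h by blast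
  have G: "Gf_full_cycle f" and nn: "num_neg_arcs f = card {u. f (\<lambda>_. False) (\<rho> u)}"
    using cform_Gf[OF cf cv] by auto
  have "fixpoints f \<noteq> {}" using h unfolding two_critical_def by auto
  then have "even (card {u. f (\<lambda>_. False) (\<rho> u)})" using cform_no_fix[OF cf] by blast
  then show "positive_circular f" using G nn by (simp add: positive_circular_def)
next
  assume nc: "negative_circular f"
  then have G: "Gf_full_cycle f" and od: "odd (num_neg_arcs f)" by (auto simp: negative_circular_def)
  obtain \<rho> where cf: "cform f \<rho>" and cv: "cover \<rho>" using Gf_cform[OF G] by blast
  have od2: "odd (card {u. f (\<lambda>_. False) (\<rho> u)})" using cform_Gf[OF cf cv] od by simp
  have "zero_critical f" unfolding zero_critical_def
    using cform_no_fix[OF cf od2] cform_sub_ne[OF cf cv] by blast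
  then show "zero_critical f \<and> non_expansive f" using cform_nonexp[OF cf] by blast
next
  assume h: "zero_critical f \<and> non_expansive f"
  obtain \<rho> where cf: "cform f \<rho>" and cv: "cover \<rho>" using zero_crit_cform h by blast
  have G: "Gf_full_cycle f" and nn: "num_neg_arcs f = card {u. f (\<lambda>_. False) (\<rho> u)}"
    using cform_Gf[OF cf cv] by auto
  have "odd (card {u. f (\<lambda>_. False) (\<rho> u)})"
  proof
    assume "even (card {u. f (\<lambda>_. False) (\<rho> u)})"
    then have "2 \<le> card (fixpoints f)" by (rule cform_two_fix[OF cf cv])
    then have "fixpoints f \<noteq> {}" by auto
    then show False using h unfolding zero_critical_def by blast
  qed
  then show "negative_circular f" using G nn by (simp add: negative_circular_def)
qed

end
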